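(* Let $\mathcal{H}$ be an infinite, continuous index set of estimation tasks (with continuous estimates and errors), let $S_{\text{def}}$ be a random defining dataset with realization $s$, and for each $h\in\mathcal{H}$ let $\theta_h$ be an unknown target estimand, $\hat\theta_h=\hat\theta_h(s)$ an estimate computed from $S_{\text{def}}$, and $e_h=e_h(s)\in\mathbb{R}$ an error. Let $\mathcal{E}(s):=\{(h,\hat\theta_h(s),\theta_h,e_h(s)):h\in\mathcal{H}\}$, and given $S_{\text{def}}=s$ let $S_{\text{err}}$ be drawn from a distribution $\mathcal{D}$ (possibly depending on $s$). Suppose there are functions $\hat u(S_{\text{err}},h,\lambda)\in\mathbb{R}$ with $\Pr_{S_{\text{err}}\sim\mathcal{D}}(\hat u(S_{\text{err}},h,\lambda)\ge e_h\mid\mathcal{E}(s))\ge 1-\lambda$ for all $h\in\mathcal{H}$, $\lambda\in(0,1)$. Let $\hat\xi(S_{\text{err}},\delta):=\sup_{h\in\mathcal{H}}\hat u(S_{\text{err}},h,\delta)$. Then for any $\delta\in(0,1)$, $$\Pr_{S_{\text{err}}\sim\mathcal{D}}\Big(\hat\xi(S_{\text{err}},\delta)\ge\sup_{h\in\mathcal{H}}e_h\,\Big|\,\mathcal{E}(s)\Big)\ge 1-\delta\quad\text{and}\quad \Pr_{(S_{\text{def}},S_{\text{err}})}\Big(\hat\xi(S_{\text{err}},\delta)\ge\sup_{h\in\mathcal{H}}e_h\Big)\ge 1-\delta .$$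
   Context: Conditioning on $\mathcal{E}(s)$ means conditioning on $S_{\text{def}}=s$, so estimates and errors are fixed with respect to the randomness of $S_{\text{err}}$; $S_{\text{err}}$ is not used to construct the estimates. *)

theory Defs
  imports "HOL-Probability.Probability"
begin

text \<open>The simultaneous upper bound: the supremum over all tasks of the
pointwise bounds (taken in the extended reals, so that an unbounded family
has supremum infinity).\<close>
definition xi_hat :: "'h set \<Rightarrow> ('w \<Rightarrow> 'h \<Rightarrow> real \<Rightarrow> real) \<Rightarrow> 'w \<Rightarrow> real \<Rightarrow> ereal" where
  "xi_hat H u w \<delta> = (SUP h\<in>H. ereal (u w h \<delta>))"

definition sup_err :: "'h set \<Rightarrow> ('s \<Rightarrow> 'h \<Rightarrow> real) \<Rightarrow> 's \<Rightarrow> ereal" where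
  "sup_err H e s = (SUP h\<in>H. ereal (e s h))"

definition joint_law :: "'s measure \<Rightarrow> 'w measure \<Rightarrow> ('s \<Rightarrow> 'w measure) \<Rightarrow> ('s \<times> 'w) measure" where
  "joint_law P W D = P \<bind> (\<lambda>s. distr (D s) (P \<Otimes>\<^sub>M W) (\<lambda>w. (s, w)))"

end

theory Submission
  imports Defs
begin

lemma key:
  fixes M W :: "'w measure" and e :: "'h \<Rightarrow> real" and u :: "'w \<Rightarrow> 'h \<Rightarrow> real"
  assumes M: "prob_space M" and sets: "sets M = sets W" and H: "H \<noteq> {}"
    and Bm: "\<And>h. h \<in> H \<Longrightarrow> {w \<in> space W. u w h \<ge> e h} \<in> sets W"
    and Bb: "\<And>h. h \<in> H \<Longrightarrow> measure M {w \<in> space W. u w h \<ge> e h} \<ge> c"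
    and Am: "{w \<in> space W. (SUP h\<in>H. ereal (u w h)) \<ge> (SUP h\<in>H. ereal (e h))} \<in> sets W"
  shows "measure M {w \<in> space W. (SUP h\<in>H. ereal (u w h)) \<ge> (SUP h\<in>H. ereal (e h))} \<ge> c"
proof -
  interpret prob_space M by (rule M)
  obtain f :: "nat \<Rightarrow> ereal" where f: "incseq f" "range f \<subseteq> (\<lambda>h. ereal (e h)) ` H"
    and fS: "(SUP h\<in>H. ereal (e h)) = (SUP i. f i)"
    using Sup_countable_SUP[of "(\<lambda>h. ereal (e h)) ` H"] H by auto
  have "\<forall>n. \<exists>h\<in>H. f n = ereal (e h)" using f(2) by auto
  then obtain hh where hh: "\<And>n. hh n \<in> H" "\<And>n. f n = ereal (e (hh n))" by metis
  define B where "B n = {w \<in> space W. u w (hh n) \<ge> e (hh n)}" for n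
  define C where "C n = (\<Union>m\<in>{n..}. B m)" for n
  have Bs: "B n \<in> sets M" for n using Bm[OF hh(1)] sets by (simp add: B_def)
  have Cs: "C n \<in> sets M" for n unfolding C_def using Bs by auto
  have Cd: "decseq C" unfolding C_def decseq_def by (auto intro: order_trans)
  have Cc: "measure M (C n) \<ge> c" for n
  proof -
    have "c \<le> measure M (B n)" using Bb[OF hh(1)] by (simp add: B_def)
    also have "\<dots> \<le> measure M (C n)" by (rule finite_measure_mono) (use Cs in \<open>auto simp: C_def\<close>)
    finally show ?thesis .
  qed
  have lim: "(\<lambda>i. measure M (C i)) \<longlonglongrightarrow> measure M (\<Inter>i. C i)"
    using Cs Cd by (intro finite_Lim_measure_decseq) auto
  have "c \<le> measure M (\<Inter>i. C i)"
    by (rule LIMSEQ_le_const[OF lim]) (use Cc in auto)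
  also have "\<dots> \<le> measure M {w \<in> space W. (SUP h\<in>H. ereal (u w h)) \<ge> (SUP h\<in>H. ereal (e h))}"
  proof (rule finite_measure_mono)
    show "{w \<in> space W. (SUP h\<in>H. ereal (u w h)) \<ge> (SUP h\<in>H. ereal (e h))} \<in> sets M"
      using Am sets by simp
    show "(\<Inter>i. C i) \<subseteq> {w \<in> space W. (SUP h\<in>H. ereal (u w h)) \<ge> (SUP h\<in>H. ereal (e h))}"
    proof
      fix w assume w: "w \<in> (\<Inter>i. C i)"
      then have ws: "w \<in> space W" by (auto simp: C_def B_def)
      have "f N \<le> (SUP h\<in>H. ereal (u w h))" for N
      proof -
        from w obtain m where m: "m \<ge> N" "w \<in> B m" by (auto simp: C_def)
        have "f N \<le> f m" using f(1) m(1) by (simp add: incseq_def)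
        also have "\<dots> = ereal (e (hh m))" by (rule hh(2))
        also have "\<dots> \<le> ereal (u w (hh m))" using m(2) by (simp add: B_def)
        also have "\<dots> \<le> (SUP h\<in>H. ereal (u w h))" using hh(1) by (rule SUP_upper)
        finally show ?thesis .
      qed
      then have "(SUP i. f i) \<le> (SUP h\<in>H. ereal (u w h))" by (rule SUP_least)
      then show "w \<in> {w \<in> space W. (SUP h\<in>H. ereal (u w h)) \<ge> (SUP h\<in>H. ereal (e h))}"
        using ws fS by simp
    qed
  qed
  finally show ?thesis .
qed

theorem theoremD1:
  fixes P :: "'s measure" and W :: "'w measure" and D :: "'s \<Rightarrow> 'w measure"
    and H :: "'h set" and e :: "'s \<Rightarrow> 'h \<Rightarrow> real"
    and u :: "'w \<Rightarrow> 'h \<Rightarrow> real \<Rightarrow> real" and \<delta> :: real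
  assumes P_prob: "prob_space P"
    and D_prob: "\<And>s. s \<in> space P \<Longrightarrow> prob_space (D s)"
    and D_sets: "\<And>s. s \<in> space P \<Longrightarrow> sets (D s) = sets W"
    and D_meas: "D \<in> measurable P (subprob_algebra W)"
    and H_inf: "infinite H"
    and u_meas: "\<And>s h lam. s \<in> space P \<Longrightarrow> h \<in> H \<Longrightarrow> lam \<in> {0<..<1} \<Longrightarrow>
        {w \<in> space W. u w h lam \<ge> e s h} \<in> sets W"
    and u_bound: "\<And>s h lam. s \<in> space P \<Longrightarrow> h \<in> H \<Longrightarrow> lam \<in> {0<..<1} \<Longrightarrow>
        measure (D s) {w \<in> space W. u w h lam \<ge> e s h} \<ge> 1 - lam"
    and ev_meas: "\<And>s. s \<in> space P \<Longrightarrow>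
        {w \<in> space W. xi_hat H u w \<delta> \<ge> sup_err H e s} \<in> sets W"
    and ev_joint_meas: "{(s, w) \<in> space (P \<Otimes>\<^sub>M W). xi_hat H u w \<delta> \<ge> sup_err H e s}
        \<in> sets (P \<Otimes>\<^sub>M W)"
    and \<delta>: "\<delta> \<in> {0<..<1}"
  shows "(\<forall>s \<in> space P. measure (D s) {w \<in> space W. xi_hat H u w \<delta> \<ge> sup_err H e s} \<ge> 1 - \<delta>)
    \<and> measure (joint_law P W D)
        {(s, w) \<in> space (P \<Otimes>\<^sub>M W). xi_hat H u w \<delta> \<ge> sup_err H e s} \<ge> 1 - \<delta>"
  proof -
  have Hne: "H \<noteq> {}" using H_inf by auto
  have part1: "\<forall>s \<in> space P. measure (D s) {w \<in> space W. xi_hat H u w \<delta> \<ge> sup_err H e s} \<ge> 1 - \<delta>"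
  proof
    fix s assume s: "s \<in> space P"
    show "measure (D s) {w \<in> space W. xi_hat H u w \<delta> \<ge> sup_err H e s} \<ge> 1 - \<delta>"
      unfolding xi_hat_def sup_err_def
      using key[where M="D s" and W=W and H=H and u="\<lambda>w h. u w h \<delta>" and e="e s" and c="1 - \<delta>"] D_prob[OF s] D_sets[OF s] Hne
        u_meas[OF s _ \<delta>] u_bound[OF s _ \<delta>] ev_meas[OF s]
      unfolding xi_hat_def sup_err_def by blast
  qed
  define E where "E = {(s, w) \<in> space (P \<Otimes>\<^sub>M W). xi_hat H u w \<delta> \<ge> sup_err H e s}"
  interpret P: prob_space P by (rule P_prob)
  have sp: "space P \<noteq> {}" by (rule P.not_empty)
  have K: "(\<lambda>s. distr (D s) (P \<Otimes>\<^sub>M W) (\<lambda>w. (s, w))) \<in> measurable P (subprob_algebra (P \<Otimes>\<^sub>M W))"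
    by (rule measurable_distr2[where f="\<lambda>s w. (s, w)" and M=W]) (simp_all add: D_meas)
  have Es: "E \<in> sets (P \<Otimes>\<^sub>M W)" using ev_joint_meas by (simp add: E_def)
  have eq: "emeasure (joint_law P W D) E = (\<integral>\<^sup>+s. emeasure (distr (D s) (P \<Otimes>\<^sub>M W) (\<lambda>w. (s, w))) E \<partial>P)"
    unfolding joint_law_def by (rule emeasure_bind[OF sp K Es])
  have inner: "emeasure (distr (D s) (P \<Otimes>\<^sub>M W) (\<lambda>w. (s, w))) E
      = emeasure (D s) {w \<in> space W. xi_hat H u w \<delta> \<ge> sup_err H e s}" if s: "s \<in> space P" for s
  proof -
    have spD: "space (D s) = space W" using D_sets[OF s] by (rule sets_eq_imp_space_eq)
    have m: "(\<lambda>w. (s, w)) \<in> measurable (D s) (P \<Otimes>\<^sub>M W)"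
      using s by (simp add: measurable_cong_sets[OF D_sets[OF s] refl])
    have "(\<lambda>w. (s, w)) -` E \<inter> space (D s) = {w \<in> space W. xi_hat H u w \<delta> \<ge> sup_err H e s}"
      using s spD by (auto simp: E_def space_pair_measure)
    then show ?thesis by (simp add: emeasure_distr[OF m Es])
  qed
  have inner2: "emeasure (distr (D s) (P \<Otimes>\<^sub>M W) (\<lambda>w. (s, w))) E \<ge> ennreal (1 - \<delta>)
       \<and> emeasure (distr (D s) (P \<Otimes>\<^sub>M W) (\<lambda>w. (s, w))) E \<le> 1" if s: "s \<in> space P" for s
  proof -
    interpret Ds: prob_space "D s" using D_prob[OF s] .
    have "{w \<in> space W. xi_hat H u w \<delta> \<ge> sup_err H e s} \<in> sets (D s)" using ev_meas[OF s] D_sets[OF s] by simp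
    then show ?thesis using inner[OF s] part1 s Ds.emeasure_eq_measure Ds.emeasure_le_1
      by (auto intro: ennreal_leI)
  qed
  have lo: "ennreal (1 - \<delta>) \<le> emeasure (joint_law P W D) E"
  proof -
    have "ennreal (1 - \<delta>) = (\<integral>\<^sup>+s. ennreal (1 - \<delta>) \<partial>P)" by (simp add: P.emeasure_space_1)
    also have "\<dots> \<le> (\<integral>\<^sup>+s. emeasure (distr (D s) (P \<Otimes>\<^sub>M W) (\<lambda>w. (s, w))) E \<partial>P)"
      using inner2 by (intro nn_integral_mono) auto
    finally show ?thesis using eq by simp
  qed
  have hi: "emeasure (joint_law P W D) E \<le> 1"
  proof -
    have "(\<integral>\<^sup>+s. emeasure (distr (D s) (P \<Otimes>\<^sub>M W) (\<lambda>w. (s, w))) E \<partial>P) \<le> (\<integral>\<^sup>+s. 1 \<partial>P)"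
      using inner2 by (intro nn_integral_mono) auto
    then show ?thesis using eq by (simp add: P.emeasure_space_1)
  qed
  have fin: "emeasure (joint_law P W D) E < top"
    using hi by (simp add: order.strict_trans1)
  have "1 - \<delta> = enn2real (ennreal (1 - \<delta>))" using \<delta> by simp
  also have "\<dots> \<le> enn2real (emeasure (joint_law P W D) E)"
    by (rule enn2real_mono[OF lo fin])
  finally have "1 - \<delta> \<le> measure (joint_law P W D) E" by (simp add: measure_def)
  then show ?thesis using part1 by (simp add: E_def)
qed

end
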